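(* Let $N\ge 1$ and let $h_\beta,h_1,\dots,h_{N-1}$ be arbitrary real numbers. Consider the $(N+1)$-qubit system (a sensor qubit $\beta$ followed by chain qubits $1,\dots,N$) with Hamiltonian $$H=\frac{h_\beta}{2}(X_\beta X_1+Y_\beta Y_1)+\sum_{k=1}^{N-1}\frac{h_k}{2}(X_kX_{k+1}+Y_kY_{k+1}),$$ initial state $\rho_0=\frac{I+X_\beta}{2}\otimes \frac{I}{2^N}$ (sensor in the $+1$ eigenstate of $X$, chain maximally mixed), and output $y(t)=\operatorname{Tr}\big(M\,e^{-\mathrm{i}Ht}\rho_0e^{\mathrm{i}Ht}\big)$ where the measured observable is $M=Y_\beta$ or $M=Z_\beta$. Then $y(t)=0$ for all $t\ge 0$ and all values of the parameters. Consequently the single-qubit sensor cannot identify the parameters $h_\beta,h_1,\dots,h_{N-1}$ (distinct parameter values yield identical outputs).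
   Context: $X,Y,Z$ denote the Pauli matrices $\sigma_x=\begin{pmatrix}0&1\\1&0\end{pmatrix}$, $\sigma_y=\begin{pmatrix}0&-\mathrm{i}\\ \mathrm{i}&0\end{pmatrix}$, $\sigma_z=\begin{pmatrix}1&0\\0&-1\end{pmatrix}$; a subscript indicates which qubit the operator acts on, with identity on all other qubits (tensor products and identities are suppressed). $\hbar=1$. *)

theory Defs
  imports Complex_Main "Jordan_Normal_Form.Matrix"
begin

definition pauliX :: "complex mat" where
  "pauliX = mat_of_rows_list 2 [[0, 1], [1, 0]]"
definition pauliY :: "complex mat" where
  "pauliY = mat_of_rows_list 2 [[0, -\<i>], [\<i>, 0]]"
definition pauliZ :: "complex mat" where
  "pauliZ = mat_of_rows_list 2 [[1, 0], [0, -1]]"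

text \<open>Computational basis index i < 2^n of an n-qubit system; qubit 0 is the
  leftmost tensor factor (most significant bit). qbit n q i is the value of qubit q.\<close>
definition qbit :: "nat \<Rightarrow> nat \<Rightarrow> nat \<Rightarrow> nat" where
  "qbit n q i = (i div 2 ^ (n - 1 - q)) mod 2"

text \<open>Single-qubit operator P acting on qubit q of an n-qubit system,
  identity on all other qubits (i.e. I \<otimes> .. \<otimes> P \<otimes> .. \<otimes> I).\<close>
definition embed :: "nat \<Rightarrow> nat \<Rightarrow> complex mat \<Rightarrow> complex mat" where
  "embed n q P = mat (2 ^ n) (2 ^ n) (\<lambda>(i, j).
     if (\<forall>r<n. r \<noteq> q \<longrightarrow> qbit n r i = qbit n r j)
     then P $$ (qbit n q i, qbit n q j) else 0)"

definition mexp :: "complex mat \<Rightarrow> complex mat" where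
  "mexp A = mat (dim_row A) (dim_col A)
     (\<lambda>(i, j). (\<Sum>k. (A ^\<^sub>m k) $$ (i, j) / of_nat (fact k)))"

text \<open>System: N+1 qubits; qubit 0 is the sensor beta, qubits 1..N are the chain.
  Coupling term (X_a X_b + Y_a Y_b).\<close>
definition XXYY :: "nat \<Rightarrow> nat \<Rightarrow> nat \<Rightarrow> complex mat" where
  "XXYY N a b = embed (N + 1) a pauliX * embed (N + 1) b pauliX
              + embed (N + 1) a pauliY * embed (N + 1) b pauliY"

definition hamiltonian :: "nat \<Rightarrow> real \<Rightarrow> (nat \<Rightarrow> real) \<Rightarrow> complex mat" where
  "hamiltonian N hb h = mat (2 ^ (N + 1)) (2 ^ (N + 1)) (\<lambda>(i, j).
      complex_of_real (hb / 2) * XXYY N 0 1 $$ (i, j)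
    + (\<Sum>k\<in>{1..<N}. complex_of_real (h k / 2) * XXYY N k (k + 1) $$ (i, j)))"

definition rho0 :: "nat \<Rightarrow> complex mat" where
  "rho0 N = (1 / 2 ^ (N + 1)) \<cdot>\<^sub>m (1\<^sub>m (2 ^ (N + 1)) + embed (N + 1) 0 pauliX)"

definition mtrace :: "complex mat \<Rightarrow> complex" where
  "mtrace A = (\<Sum>i<dim_row A. A $$ (i, i))"

definition sensor_output :: "nat \<Rightarrow> complex mat \<Rightarrow> real \<Rightarrow> (nat \<Rightarrow> real) \<Rightarrow> real \<Rightarrow> complex" where
  "sensor_output N M hb h t = (let H = hamiltonian N hb h in
     mtrace (M * mexp ((- (\<i> * complex_of_real t)) \<cdot>\<^sub>m H) * rho0 N
              * mexp ((\<i> * complex_of_real t) \<cdot>\<^sub>m H)))"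

end

theory Submission
  imports Defs
begin

lemma divhelp: "r < (p::nat) \<Longrightarrow> (x*p + r) div p = x"
  by simp

lemma parhelp: assumes "a < 2*(m::nat)" shows "(2*m - 1 - a) mod 2 = 1 - a mod 2"
proof -
  define c where "c = 2*m - 1 - a"
  have c: "2*m = a + c + 1" using assms unfolding c_def by linarith
  have ev: "even (a + c + 1)" using c by (metis dvd_triv_left)
  then have "c mod 2 = 1 - a mod 2" by (cases "even a") (auto simp: mod_2_eq_odd)
  then show ?thesis unfolding c_def .
qed

lemma bit_compl:
  fixes i n s :: nat
  assumes "i < 2^n" "s < n"
  shows "((2^n - 1 - i) div 2^s) mod 2 = 1 - (i div 2^s) mod 2"
proof -
  define a where "a = i div 2^s"
  define b where "b = i mod 2^s"
  define m where "m = (2::nat)^(n-s-1)"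
  have pn: "(2::nat)^n = 2*m*2^s" proof -
    have "n = (n-s-1) + 1 + s" using assms(2) by simp
    then have "(2::nat)^n = 2^((n-s-1) + 1 + s)" by simp
    also have "\<dots> = 2*m*2^s" unfolding m_def power_add by simp
    finally show ?thesis .
  qed
  have i: "i = a*2^s + b" unfolding a_def b_def by (metis div_mult_mod_eq)
  have b: "b < 2^s" unfolding b_def by simp
  have a: "a < 2*m" proof -
    have "a*2^s < 2*m*2^s" using assms(1) pn i by linarith
    then show ?thesis by simp
  qed
  have "2^n - 1 - i = (2*m - 1 - a)*2^s + (2^s - 1 - b)"
  proof -
    define c where "c = 2*m - 1 - a"
    have c: "2*m = a + 1 + c" using a unfolding c_def by linarith
    have e1: "(2::nat)^n = a*2^s + 2^s + c*2^s" proof -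
      have "(2::nat)^n = (2*m)*2^s" using pn by simp
      also have "\<dots> = (a+1+c)*2^s" using c by simp
      finally show ?thesis by (simp add: algebra_simps)
    qed
    show ?thesis unfolding c_def[symmetric] using e1 i b by linarith
  qed
  then have that': "2^n - 1 - i = (2*m - 1 - a)*2^s + (2^s - 1 - b)" .
  then have "(2^n - 1 - i) div 2^s = 2*m - 1 - a" 
  proof -
    have "2^s - 1 - b < (2::nat)^s" by simp
    from divhelp[OF this, of "2*m-1-a"] show ?thesis using that' by simp
  qed
  then have "((2^n - 1 - i) div 2^s) mod 2 = (2*m - 1 - a) mod 2" by (simp only:)
  also have "\<dots> = 1 - a mod 2" by (rule parhelp[OF a])
  finally show ?thesis unfolding a_def .
qed
lemma qbit_compl:
  assumes "i < 2^n" "r < n"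
  shows "qbit n r (2^n - 1 - i) = 1 - qbit n r i"
  unfolding qbit_def using bit_compl[OF assms(1), of "n-1-r"] assms(2) by simp

lemma qbit_lt2: "qbit n r i < 2"
  unfolding qbit_def by simp

definition flipm :: "nat \<Rightarrow> complex mat \<Rightarrow> complex mat" where
  "flipm d A = mat d d (\<lambda>(i,j). A $$ (d - 1 - i, d - 1 - j))"

lemma flipm_carrier[simp]: "flipm d A \<in> carrier_mat d d"
  unfolding flipm_def by simp

lemma flipm_dim[simp]: "dim_row (flipm d A) = d" "dim_col (flipm d A) = d"
  unfolding flipm_def by simp_all

lemma flipm_index[simp]: "i < d \<Longrightarrow> j < d \<Longrightarrow> flipm d A $$ (i,j) = A $$ (d - 1 - i, d - 1 - j)"
  unfolding flipm_def by simp

lemma flip_bij: "bij_betw (\<lambda>i. d - 1 - i) {0..<d} {0..<(d::nat)}"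
  by (rule bij_betw_byWitness[where f'="\<lambda>i. d-1-i"]) auto

lemma flipm_mult:
  assumes A: "A \<in> carrier_mat d d" and B: "B \<in> carrier_mat d d"
  shows "flipm d (A * B) = flipm d A * flipm d B"
proof (rule eq_matI)
  fix i j assume i: "i < dim_row (flipm d A * flipm d B)" and j: "j < dim_col (flipm d A * flipm d B)"
  then have i: "i < d" and j: "j < d" by simp_all
  have "flipm d (A * B) $$ (i,j) = (\<Sum>k\<in>{0..<d}. A $$ (d-1-i, k) * B $$ (k, d-1-j))"
    using A B i j by (simp add: scalar_prod_def)
  also have "\<dots> = (\<Sum>k\<in>{0..<d}. A $$ (d-1-i, d-1-k) * B $$ (d-1-k, d-1-j))"
    using sum.reindex_bij_betw[OF flip_bij[of d], of "\<lambda>k. A $$ (d-1-i, k) * B $$ (k, d-1-j)"]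
    by simp
  also have "\<dots> = (flipm d A * flipm d B) $$ (i,j)"
    using i j by (simp add: scalar_prod_def)
  finally show "flipm d (A * B) $$ (i,j) = (flipm d A * flipm d B) $$ (i,j)" .
qed auto

lemma flipm_add:
  assumes A: "A \<in> carrier_mat d d" and B: "B \<in> carrier_mat d d"
  shows "flipm d (A + B) = flipm d A + flipm d B"
  by (rule eq_matI) (use A B in auto)

lemma flipm_smult:
  assumes A: "A \<in> carrier_mat d d"
  shows "flipm d (c \<cdot>\<^sub>m A) = c \<cdot>\<^sub>m flipm d A"
  by (rule eq_matI) (use A in auto)

lemma flipm_one: "flipm d (1\<^sub>m d) = 1\<^sub>m d"
  by (rule eq_matI) auto

lemma flipm_pow:
  assumes A: "A \<in> carrier_mat d d"
  shows "flipm d (A ^\<^sub>m k) = (flipm d A) ^\<^sub>m k"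
proof (induction k)
  case 0
  then show ?case using A by (simp add: flipm_one)
next
  case (Suc k)
  have "flipm d (A ^\<^sub>m Suc k) = flipm d (A ^\<^sub>m k * A)" by simp
  also have "\<dots> = flipm d (A ^\<^sub>m k) * flipm d A"
    by (rule flipm_mult) (use A in auto)
  finally show ?case using Suc by simp
qed

lemma flipm_mexp:
  assumes A: "A \<in> carrier_mat d d"
  shows "flipm d (mexp A) = mexp (flipm d A)"
proof (rule eq_matI)
  fix i j assume "i < dim_row (mexp (flipm d A))" "j < dim_col (mexp (flipm d A))"
  then have i: "i < d" and j: "j < d" by (simp_all add: mexp_def)
  have pw: "\<And>k. (flipm d A ^\<^sub>m k) $$ (i,j) = (A ^\<^sub>m k) $$ (d-1-i, d-1-j)"
    using flipm_pow[OF A] i j by (metis flipm_index)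
  show "flipm d (mexp A) $$ (i,j) = mexp (flipm d A) $$ (i,j)"
    using A i j by (simp add: mexp_def pw)
qed (use A in \<open>auto simp: mexp_def\<close>)

lemma mexp_carrier: "A \<in> carrier_mat d d \<Longrightarrow> mexp A \<in> carrier_mat d d"
  unfolding mexp_def by auto

lemma mtrace_flipm:
  assumes A: "A \<in> carrier_mat d d"
  shows "mtrace (flipm d A) = mtrace A"
proof -
  have "mtrace (flipm d A) = (\<Sum>i\<in>{0..<d}. A $$ (d-1-i, d-1-i))"
    unfolding mtrace_def by (simp add: lessThan_atLeast0)
  also have "\<dots> = (\<Sum>i\<in>{0..<d}. A $$ (i, i))"
    using sum.reindex_bij_betw[OF flip_bij[of d], of "\<lambda>k. A $$ (k, k)"] by simp
  also have "\<dots> = mtrace A" unfolding mtrace_def using A by (simp add: lessThan_atLeast0)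
  finally show ?thesis .
qed

lemma mtrace_smult: "A \<in> carrier_mat d d \<Longrightarrow> mtrace (c \<cdot>\<^sub>m A) = c * mtrace A"
  unfolding mtrace_def by (auto simp add: sum_distrib_left intro!: sum.cong)

lemma embed_carrier[simp]: "embed n q P \<in> carrier_mat (2^n) (2^n)"
  unfolding embed_def by simp

lemma onem_eq: "x < 2 \<Longrightarrow> y < 2 \<Longrightarrow> (1 - x = 1 - (y::nat)) = (x = y)" by auto

lemma flipm_embed:
  assumes q: "q < n" and P: "\<And>a b. a < 2 \<Longrightarrow> b < 2 \<Longrightarrow> P $$ (1-a, 1-b) = c * P $$ (a,b)"
  shows "flipm (2^n) (embed n q P) = c \<cdot>\<^sub>m embed n q P"
proof (rule eq_matI)
  fix i j assume "i < dim_row (c \<cdot>\<^sub>m embed n q P)" "j < dim_col (c \<cdot>\<^sub>m embed n q P)"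
  then have i: "i < 2^n" and j: "j < 2^n" by (simp_all add: embed_def)
  have fi: "2^n - 1 - i < (2::nat)^n" using i by simp
  have fj: "2^n - 1 - j < (2::nat)^n" using j by simp
  have qi: "\<And>r. r < n \<Longrightarrow> qbit n r (2^n - 1 - i) = 1 - qbit n r i" using qbit_compl i by blast
  have qj: "\<And>r. r < n \<Longrightarrow> qbit n r (2^n - 1 - j) = 1 - qbit n r j" using qbit_compl j by blast
  have cond: "(\<forall>r<n. r \<noteq> q \<longrightarrow> qbit n r (2^n - 1 - i) = qbit n r (2^n - 1 - j))
      \<longleftrightarrow> (\<forall>r<n. r \<noteq> q \<longrightarrow> qbit n r i = qbit n r j)"
  proof -
    have h: "\<And>r. r < n \<Longrightarrow> (qbit n r (2^n - 1 - i) = qbit n r (2^n - 1 - j)) = (qbit n r i = qbit n r j)"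
      by (simp only: qi qj onem_eq[OF qbit_lt2 qbit_lt2])
    show ?thesis using h by auto
  qed
  show "flipm (2^n) (embed n q P) $$ (i,j) = (c \<cdot>\<^sub>m embed n q P) $$ (i,j)"
    using i j fi fj cond qi[OF q] qj[OF q] P[OF qbit_lt2 qbit_lt2]
    by (auto simp add: embed_def)
qed (auto simp: embed_def)

lemma lt2: "a < (2::nat) \<Longrightarrow> a = 0 \<or> a = 1" by auto

lemma pX: "a < 2 \<Longrightarrow> b < 2 \<Longrightarrow> pauliX $$ (1-a, 1-b) = 1 * pauliX $$ (a,b)"
  by (auto dest!: lt2 simp: pauliX_def mat_of_rows_list_def)
lemma pY: "a < 2 \<Longrightarrow> b < 2 \<Longrightarrow> pauliY $$ (1-a, 1-b) = (-1) * pauliY $$ (a,b)"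
  by (auto dest!: lt2 simp: pauliY_def mat_of_rows_list_def)
lemma pZ: "a < 2 \<Longrightarrow> b < 2 \<Longrightarrow> pauliZ $$ (1-a, 1-b) = (-1) * pauliZ $$ (a,b)"
  by (auto dest!: lt2 simp: pauliZ_def mat_of_rows_list_def)

lemma smult_smult_mat': "a \<cdot>\<^sub>m (b \<cdot>\<^sub>m A) = (a * b) \<cdot>\<^sub>m (A :: complex mat)"
  by (rule eq_matI) auto

lemma one_smult_mat': "(1::complex) \<cdot>\<^sub>m A = A"
  by (rule eq_matI) auto

lemma flipm_XXYY:
  assumes a: "a < N + 1" and b: "b < N + 1"
  shows "flipm (2^(N+1)) (XXYY N a b) = XXYY N a b"
proof -
  let ?d = "2^(N+1)::nat"
  let ?Xa = "embed (N+1) a pauliX" and ?Xb = "embed (N+1) b pauliX"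
  let ?Ya = "embed (N+1) a pauliY" and ?Yb = "embed (N+1) b pauliY"
  have c: "?Xa \<in> carrier_mat ?d ?d" "?Xb \<in> carrier_mat ?d ?d" "?Ya \<in> carrier_mat ?d ?d" "?Yb \<in> carrier_mat ?d ?d"
    by (rule embed_carrier)+
  have fX: "flipm ?d ?Xa = ?Xa" "flipm ?d ?Xb = ?Xb"
    using flipm_embed[OF a pX] flipm_embed[OF b pX] by (simp_all add: one_smult_mat')
  have fY: "flipm ?d ?Ya = (-1) \<cdot>\<^sub>m ?Ya" "flipm ?d ?Yb = (-1) \<cdot>\<^sub>m ?Yb"
    using flipm_embed[OF a pY] flipm_embed[OF b pY] by simp_all
  have "flipm ?d (XXYY N a b) = flipm ?d (?Xa * ?Xb) + flipm ?d (?Ya * ?Yb)"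
    unfolding XXYY_def by (rule flipm_add) (use c in \<open>meson mult_carrier_mat\<close>)+
  also have "\<dots> = ?Xa * ?Xb + ((-1) \<cdot>\<^sub>m ?Ya) * ((-1) \<cdot>\<^sub>m ?Yb)"
    using flipm_mult[OF c(1) c(2)] flipm_mult[OF c(3) c(4)] fX fY by simp
  also have "((-1) \<cdot>\<^sub>m ?Ya) * ((-1) \<cdot>\<^sub>m ?Yb) = ?Ya * ?Yb"
    using c by (simp add: mult_smult_assoc_mat[of _ ?d ?d] mult_smult_distrib[of _ ?d ?d] smult_smult_mat' one_smult_mat')
  finally show ?thesis unfolding XXYY_def .
qed

lemma XXYY_carrier: "XXYY N a b \<in> carrier_mat (2^(N+1)) (2^(N+1))"
  unfolding XXYY_def by (meson add_carrier_mat mult_carrier_mat embed_carrier)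

lemma XXYY_flip_entry:
  assumes "a < N + 1" "b < N + 1" "i < 2^(N+1)" "j < 2^(N+1)"
  shows "XXYY N a b $$ (2^(N+1) - 1 - i, 2^(N+1) - 1 - j) = XXYY N a b $$ (i, j)"
  using flipm_index[OF assms(3,4), of "XXYY N a b"] flipm_XXYY[OF assms(1,2)] by simp

lemma hamiltonian_carrier: "hamiltonian N hb h \<in> carrier_mat (2^(N+1)) (2^(N+1))"
  unfolding hamiltonian_def by simp

lemma flipm_hamiltonian:
  assumes N: "N \<ge> 1"
  shows "flipm (2^(N+1)) (hamiltonian N hb h) = hamiltonian N hb h"
proof (rule eq_matI)
  fix i j assume "i < dim_row (hamiltonian N hb h)" "j < dim_col (hamiltonian N hb h)"
  then have i: "i < 2^(N+1)" and j: "j < 2^(N+1)" by (simp_all add: hamiltonian_def)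
  have fi: "2^(N+1) - 1 - i < (2::nat)^(N+1)" and fj: "2^(N+1) - 1 - j < (2::nat)^(N+1)" using i j by simp_all
  have s: "(\<Sum>k\<in>{1..<N}. complex_of_real (h k / 2) * XXYY N k (k + 1) $$ (2^(N+1) - 1 - i, 2^(N+1) - 1 - j))
        = (\<Sum>k\<in>{1..<N}. complex_of_real (h k / 2) * XXYY N k (k + 1) $$ (i, j))"
  proof (rule sum.cong[OF refl])
    fix k assume "k \<in> {1..<N}"
    then have k1: "k < N + 1" and k2: "k + 1 < N + 1" by auto
    show "complex_of_real (h k / 2) * XXYY N k (k + 1) $$ (2^(N+1) - 1 - i, 2^(N+1) - 1 - j)
        = complex_of_real (h k / 2) * XXYY N k (k + 1) $$ (i, j)"
      by (simp only: XXYY_flip_entry[OF k1 k2 i j])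
  qed
  show "flipm (2^(N+1)) (hamiltonian N hb h) $$ (i,j) = hamiltonian N hb h $$ (i,j)"
  proof -
    have x0: "XXYY N 0 1 $$ (2^(N+1) - 1 - i, 2^(N+1) - 1 - j) = XXYY N 0 1 $$ (i,j)"
      using N by (intro XXYY_flip_entry[OF _ _ i j]) auto
    show ?thesis using i j fi fj s x0 by (simp add: hamiltonian_def)
  qed
qed (auto simp: hamiltonian_def)

lemma rho0_carrier: "rho0 N \<in> carrier_mat (2^(N+1)) (2^(N+1))"
  unfolding rho0_def by (meson smult_carrier_mat add_carrier_mat one_carrier_mat embed_carrier)

lemma flipm_rho0: "flipm (2^(N+1)) (rho0 N) = rho0 N"
proof -
  let ?d = "2^(N+1)::nat"
  have "flipm ?d (rho0 N) = (1 / 2 ^ (N + 1)) \<cdot>\<^sub>m (flipm ?d (1\<^sub>m ?d) + flipm ?d (embed (N + 1) 0 pauliX))"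
  proof -
    have c1: "1\<^sub>m ?d \<in> carrier_mat ?d ?d" by (rule one_carrier_mat)
    have c2: "embed (N + 1) 0 pauliX \<in> carrier_mat ?d ?d" by (rule embed_carrier)
    show ?thesis unfolding rho0_def
      by (simp only: flipm_smult[OF add_carrier_mat[OF c2]] flipm_add[OF c1 c2])
  qed
  also have "\<dots> = rho0 N" unfolding rho0_def
    using flipm_embed[of 0 "N+1" pauliX 1, OF _ pX] by (simp add: flipm_one one_smult_mat')
  finally show ?thesis .
qed

lemma output_zero:
  assumes N: "N \<ge> 1"
    and M: "M = embed (N + 1) 0 pauliY \<or> M = embed (N + 1) 0 pauliZ"
  shows "sensor_output N M hb h t = 0"
proof -
  let ?d = "2^(N+1)::nat"
  define H where "H = hamiltonian N hb h"
  define E1 where "E1 = mexp ((- (\<i> * complex_of_real t)) \<cdot>\<^sub>m H)"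
  define E2 where "E2 = mexp ((\<i> * complex_of_real t) \<cdot>\<^sub>m H)"
  define R where "R = rho0 N"
  have hc: "H \<in> carrier_mat ?d ?d" unfolding H_def by (rule hamiltonian_carrier)
  have e1c: "E1 \<in> carrier_mat ?d ?d" unfolding E1_def by (rule mexp_carrier[OF smult_carrier_mat[OF hc]])
  have e2c: "E2 \<in> carrier_mat ?d ?d" unfolding E2_def by (rule mexp_carrier[OF smult_carrier_mat[OF hc]])
  have rc: "R \<in> carrier_mat ?d ?d" unfolding R_def by (rule rho0_carrier)
  have mc: "M \<in> carrier_mat ?d ?d" using M embed_carrier by metis
  have fH: "flipm ?d H = H" unfolding H_def by (rule flipm_hamiltonian[OF N])
  have fE1: "flipm ?d E1 = E1" unfolding E1_def
    by (simp only: flipm_mexp[OF smult_carrier_mat[OF hc]] flipm_smult[OF hc] fH)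
  have fE2: "flipm ?d E2 = E2" unfolding E2_def
    by (simp only: flipm_mexp[OF smult_carrier_mat[OF hc]] flipm_smult[OF hc] fH)
  have fR: "flipm ?d R = R" unfolding R_def by (rule flipm_rho0)
  have q0: "0 < N + 1" by simp
  have fM: "flipm ?d M = (-1) \<cdot>\<^sub>m M"
    using M flipm_embed[OF q0 pY] flipm_embed[OF q0 pZ] by auto
  define P where "P = M * E1 * R * E2"
  have c1: "M * E1 \<in> carrier_mat ?d ?d" using mc e1c by (rule mult_carrier_mat)
  have c2: "M * E1 * R \<in> carrier_mat ?d ?d" using c1 rc by (rule mult_carrier_mat)
  have pc: "P \<in> carrier_mat ?d ?d" unfolding P_def using c2 e2c by (rule mult_carrier_mat)
  have "flipm ?d P = flipm ?d M * flipm ?d E1 * flipm ?d R * flipm ?d E2"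
    unfolding P_def by (simp only: flipm_mult[OF c2 e2c] flipm_mult[OF c1 rc] flipm_mult[OF mc e1c])
  also have "\<dots> = ((-1) \<cdot>\<^sub>m M) * E1 * R * E2" by (simp only: fM fE1 fR fE2)
  also have "\<dots> = (-1) \<cdot>\<^sub>m P" unfolding P_def
    by (simp only: mult_smult_assoc_mat[OF mc e1c] mult_smult_assoc_mat[OF c1 rc] mult_smult_assoc_mat[OF c2 e2c])
  finally have fP: "flipm ?d P = (-1) \<cdot>\<^sub>m P" .
  have "mtrace P = mtrace (flipm ?d P)" using mtrace_flipm[OF pc] by simp
  also have "\<dots> = - mtrace P" unfolding fP using mtrace_smult[OF pc] by simp
  finally have "mtrace P = 0" by simp
  then show ?thesis unfolding sensor_output_def Let_def P_def E1_def E2_def R_def H_def .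
qed

theorem proposition1:
  fixes N :: nat and hb hb' t :: real and h h' :: "nat \<Rightarrow> real" and M :: "complex mat"
  assumes "N \<ge> 1"
    and "M = embed (N + 1) 0 pauliY \<or> M = embed (N + 1) 0 pauliZ"
    and "t \<ge> 0"
  shows "sensor_output N M hb h t = 0 \<and> sensor_output N M hb h t = sensor_output N M hb' h' t"
  using output_zero[OF assms(1,2), of hb h t] output_zero[OF assms(1,2), of hb' h' t] by simp

end
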